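(* Assume $d\ge2$. Let $A,B$ be an LR pair on $V$ with $AB-BA=I$, and define $C=-A-B$. Then $B,C$ and $C,A$ are LR pairs on $V$, and $BC-CB=I$ and $CA-AC=I$.
   Context: Let $V$ be a vector space over a field $\mathbb F$ with $\dim V=d+1$. A decomposition of $V$ is a sequence $(V_i)_{i=0}^d$ of one-dimensional subspaces with $V=\bigoplus V_i$. $X\in\mathrm{End}(V)$ lowers it if $XV_i=V_{i-1}$ ($1\le i\le d$), $XV_0=0$; raises it if $XV_i=V_{i+1}$ ($0\le i\le d-1$), $XV_d=0$. An ordered pair $A,B\in\mathrm{End}(V)$ is an LR pair on $V$ if some decomposition is lowered by $A$ and raised by $B$. (Under the hypothesis $AB-BA=I$ one necessarily has that $d+1$ is a prime $p$ and $\mathrm{Char}\,\mathbb F=p$.) *)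

theory Defs
  imports Complex_Main
begin

definition is_decomposition ::
  "('f::field \<Rightarrow> 'v::ab_group_add \<Rightarrow> 'v) \<Rightarrow> nat \<Rightarrow> (nat \<Rightarrow> 'v set) \<Rightarrow> bool" where
  "is_decomposition scale d Vs \<longleftrightarrow>
     (\<forall>i\<le>d. Modules.module.subspace scale (Vs i) \<and> Vector_Spaces.vector_space.dim scale (Vs i) = 1) \<and>
     Modules.module.span scale (\<Union>i\<le>d. Vs i) = UNIV \<and>
     (\<forall>f. (\<forall>i\<le>d. f i \<in> Vs i) \<and> (\<Sum>i\<le>d. f i) = 0 \<longrightarrow> (\<forall>i\<le>d. f i = 0))"

definition lowers :: "nat \<Rightarrow> ('v::ab_group_add \<Rightarrow> 'v) \<Rightarrow> (nat \<Rightarrow> 'v set) \<Rightarrow> bool" where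
  "lowers d X Vs \<longleftrightarrow> (\<forall>i. 1 \<le> i \<and> i \<le> d \<longrightarrow> X ` Vs i = Vs (i - 1)) \<and> X ` Vs 0 = {0}"

definition raises :: "nat \<Rightarrow> ('v::ab_group_add \<Rightarrow> 'v) \<Rightarrow> (nat \<Rightarrow> 'v set) \<Rightarrow> bool" where
  "raises d X Vs \<longleftrightarrow> (\<forall>i. i < d \<longrightarrow> X ` Vs i = Vs (i + 1)) \<and> X ` Vs d = {0}"

definition LR_pair ::
  "('f::field \<Rightarrow> 'v::ab_group_add \<Rightarrow> 'v) \<Rightarrow> nat \<Rightarrow> ('v \<Rightarrow> 'v) \<Rightarrow> ('v \<Rightarrow> 'v) \<Rightarrow> bool" where
  "LR_pair scale d A B \<longleftrightarrow> Vector_Spaces.linear scale scale A \<and> Vector_Spaces.linear scale scale B \<and>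
     (\<exists>Vs. is_decomposition scale d Vs \<and> lowers d A Vs \<and> raises d B Vs)"

end

theory Submission
  imports Defs
begin

lemma lin_facts:
  assumes "Vector_Spaces.linear s s X"
  shows "X (x + y) = X x + X y" "X (s c x) = s c (X x)" "X 0 = 0" "X (- x) = - X x"
    "X (x - y) = X x - X y" "X (sum f S) = (\<Sum>i\<in>S. X (f i))"
proof -
  interpret Vector_Spaces.linear s s X by fact
  show "X (x + y) = X x + X y" "X (s c x) = s c (X x)" "X 0 = 0" "X (- x) = - X x"
    "X (x - y) = X x - X y" "X (sum f S) = (\<Sum>i\<in>S. X (f i))"
    by (simp_all add: add scale zero neg diff sum)
qed


fun acoef :: "nat \<Rightarrow> 'a::field" where
  "acoef 0 = 1"
| "acoef (Suc 0) = 0"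
| "acoef (Suc (Suc j)) = - acoef j / of_nat (Suc (Suc j))"

lemma acoef_odd: "acoef (Suc (2 * k)) = 0"
  by (induction k) auto

lemma lin_pow:
  assumes "Vector_Spaces.linear s s X" "vector_space s"
  shows "Vector_Spaces.linear s s (X ^^ k)"
proof (induction k)
  case 0 then show ?case using assms(2) by (simp add: vector_space.linear_ident)
next
  case (Suc k) then show ?case unfolding funpow.simps(2) by (rule Vector_Spaces.linear_compose[OF _ assms(1)])
qed

context vector_space begin

lemma two_scale: "2 *s x = x + x"
  by (metis one_add_one scale_left_distrib scale_one)

lemma dim_zero_set: "dim {0} = 0"
  by (metis dim_span span_empty dim_eq_card_independent independent_empty card.empty)

lemma fd_exists:
  assumes "dim (UNIV::'b set) = Suc n"
  shows "\<exists>Bs. finite_dimensional_vector_space scale Bs"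
proof -
  obtain Bs where "Bs \<subseteq> UNIV" "independent Bs" "UNIV \<subseteq> span Bs" "card Bs = dim (UNIV::'b set)"
    using basis_exists by blast
  then have "finite Bs" using assms card.infinite by fastforce
  then show ?thesis
    using \<open>independent Bs\<close> \<open>UNIV \<subseteq> span Bs\<close>
    by (metis finite_dimensional_vector_space.intro finite_dimensional_vector_space_axioms.intro
        top.extremum_uniqueI vector_space_axioms)
qed

lemma dim1_nonzero:
  assumes "subspace S" "dim S = 1"
  obtains v where "v \<in> S" "v \<noteq> 0"
proof -
  have "\<not> S \<subseteq> {0}"
  proof
    assume "S \<subseteq> {0}"
    then have "S \<subseteq> span {}" by simp
    then have "dim S \<le> card ({}::'b set)" using dim_le_card by blast
    with assms show False by simp
  qed
  then show ?thesis using that by blast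
qed

lemma dim1_span:
  assumes fd: "dim (UNIV::'b set) = Suc n" and "subspace S" "dim S = 1" "v \<in> S" "v \<noteq> 0"
  shows "S = span {v}"
proof -
  obtain Bs where "finite_dimensional_vector_space scale Bs" using fd_exists[OF fd] by blast
  then interpret fd: finite_dimensional_vector_space scale Bs .
  have "S \<subseteq> span {v}"
    by (rule fd.card_ge_dim_independent) (use assms in auto)
  moreover have "span {v} \<subseteq> S" using assms by (simp add: span_minimal)
  ultimately show ?thesis by blast
qed

lemma image_span_single:
  assumes "Vector_Spaces.linear scale scale X"
  shows "X ` span {x} = span {X x}"
  unfolding span_singleton image_image using lin_facts(2)[OF assms] by auto

lemma span_single_scale:
  assumes "c \<noteq> 0"
  shows "span {c *s x} = span {x}"
proof
  show "span {c *s x} \<subseteq> span {x}"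
    by (rule span_minimal) (auto intro: span_scale span_base)
  have "x = (1 / c) *s (c *s x)" using assms by simp
  then have "x \<in> span {c *s x}" by (metis span_scale span_base singletonI)
  then show "span {x} \<subseteq> span {c *s x}"
    by (intro span_minimal) auto
qed


lemma indep_seq:
  fixes n d :: nat
  assumes linX: "Vector_Spaces.linear scale scale X"
   and low: "\<forall>i. 1 \<le> i \<and> i \<le> d \<longrightarrow> X (w i) = \<alpha> i *s w (i - 1) \<and> \<alpha> i \<noteq> 0"
   and X0: "X (w 0) = 0" and w0: "w 0 \<noteq> 0"
  shows "n \<le> d \<Longrightarrow> (\<Sum>i\<le>n. c i *s w i) = 0 \<Longrightarrow> i \<le> n \<Longrightarrow> c i = 0"
proof (induction n arbitrary: c i)
  case 0 then show ?case using w0 by simp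
next
  case (Suc n)
  have "X (\<Sum>i\<le>Suc n. c i *s w i) = 0" using Suc.prems by (simp add: lin_facts[OF linX])
  moreover have "X (\<Sum>i\<le>Suc n. c i *s w i) = (\<Sum>i\<le>n. (c (Suc i) * \<alpha> (Suc i)) *s w i)"
  proof -
    have "X (\<Sum>i\<le>Suc n. c i *s w i) = (\<Sum>i\<le>Suc n. c i *s X (w i))"
      by (simp add: lin_facts[OF linX])
    also have "\<dots> = c 0 *s X (w 0) + (\<Sum>i\<le>n. c (Suc i) *s X (w (Suc i)))"
      by (rule sum.atMost_Suc_shift)
    also have "\<dots> = (\<Sum>i\<le>n. (c (Suc i) * \<alpha> (Suc i)) *s w i)"
      using X0 low Suc.prems(1) by (auto intro!: sum.cong)
    finally show ?thesis .
  qed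
  ultimately have z: "(\<Sum>i\<le>n. (c (Suc i) * \<alpha> (Suc i)) *s w i) = 0" by simp
  have cs: "c (Suc i) = 0" if "i \<le> n" for i
    using Suc.IH[of "\<lambda>i. c (Suc i) * \<alpha> (Suc i)" i, OF _ z that] Suc.prems(1) low that by auto
  have "(\<Sum>i\<le>Suc n. c i *s w i) = c 0 *s w 0 + (\<Sum>i\<le>n. c (Suc i) *s w (Suc i))"
    by (rule sum.atMost_Suc_shift)
  also have "\<dots> = c 0 *s w 0" using cs by simp
  finally have "c 0 = 0" using Suc.prems(2) w0 by simp
  then show ?case using cs Suc.prems(3) by (cases i) auto
qed

lemma LR_gen:
  fixes d :: nat
  assumes dimV: "dim (UNIV::'b set) = d + 1"
   and linX: "Vector_Spaces.linear scale scale X" and linY: "Vector_Spaces.linear scale scale Y"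
   and low: "\<forall>i. 1 \<le> i \<and> i \<le> d \<longrightarrow> X (w i) = \<alpha> i *s w (i - 1) \<and> \<alpha> i \<noteq> 0"
   and X0: "X (w 0) = 0"
   and up: "\<forall>i<d. Y (w i) = \<beta> i *s w (Suc i) \<and> \<beta> i \<noteq> 0"
   and Yd: "Y (w d) = 0"
   and w0: "w 0 \<noteq> 0"
  shows "LR_pair scale d X Y"
proof -
  note ind = indep_seq[OF linX low X0 w0]
  have wnz: "w i \<noteq> 0" if "i \<le> d" for i
  proof
    assume "w i = 0"
    have "(\<Sum>k\<le>d. (if k = i then 1 else 0) *s w k) = (\<Sum>k\<le>d. (if k = i then w i else 0))"
      by (rule sum.cong) auto
    also have "\<dots> = 0" using \<open>w i = 0\<close> by simp
    finally show False using ind[of d "\<lambda>k. if k = i then 1 else 0" i] that by simp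
  qed
  have inj: "inj_on w {..d}"
  proof (rule inj_onI, rule ccontr)
    fix i j assume ij: "i \<in> {..d}" "j \<in> {..d}" "w i = w j" "i \<noteq> j"
    have "(\<Sum>k\<le>d. ((if k = i then 1 else 0) - (if k = j then 1 else 0)) *s w k)
        = (\<Sum>k\<le>d. (if k = i then w i else 0)) - (\<Sum>k\<le>d. (if k = j then w j else 0))"
      unfolding scale_left_diff_distrib sum_subtractf by (intro arg_cong2[where f="(-)"] sum.cong) auto
    also have "\<dots> = 0" using ij by simp
    finally show False using ind[of d "\<lambda>k. (if k = i then 1 else 0) - (if k = j then 1 else 0)" i] ij
      by simp
  qed
  define W where "W = w ` {..d}"
  have cardW: "card W = d + 1" unfolding W_def using card_image[OF inj] by simp
  have indW: "independent W"
  proof (rule independent_if_scalars_zero)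
    show "finite W" unfolding W_def by simp
    fix f x assume "(\<Sum>x\<in>W. f x *s x) = 0" "x \<in> W"
    then obtain i where i: "i \<le> d" "x = w i" unfolding W_def by auto
    have "(\<Sum>x\<in>W. f x *s x) = (\<Sum>k\<le>d. f (w k) *s w k)"
      unfolding W_def by (simp add: sum.reindex[OF inj])
    then show "f x = 0" using ind[of d "\<lambda>k. f (w k)" i] i \<open>(\<Sum>x\<in>W. f x *s x) = 0\<close> by simp
  qed
  obtain Bs where "finite_dimensional_vector_space scale Bs" using fd_exists dimV by fastforce
  then interpret fd: finite_dimensional_vector_space scale Bs .
  have spW: "span W = UNIV"
    using fd.card_ge_dim_independent[of W UNIV] indW cardW dimV by auto
  define Vs where "Vs = (\<lambda>i. span {w i})"
  have dec: "is_decomposition scale d Vs"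
    unfolding is_decomposition_def
  proof (intro conjI)
    show "\<forall>i\<le>d. subspace (Vs i) \<and> dim (Vs i) = 1" unfolding Vs_def using wnz
      by (simp add: dim_span_eq_card_independent)
  next
    have "W \<subseteq> (\<Union>i\<le>d. Vs i)" unfolding W_def Vs_def by (auto intro: span_base)
    then have "span W \<subseteq> span (\<Union>i\<le>d. Vs i)" by (rule span_mono)
    then show "span (\<Union>i\<le>d. Vs i) = UNIV" using spW by auto
  next
    show "\<forall>f. (\<forall>i\<le>d. f i \<in> Vs i) \<and> sum f {..d} = 0 \<longrightarrow> (\<forall>i\<le>d. f i = 0)"
    proof (rule allI, rule impI)
    fix f assume f: "(\<forall>i\<le>d. f i \<in> Vs i) \<and> sum f {..d} = 0"
    define c where "c i = (SOME k. f i = k *s w i)" for i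
    have fc: "f i = c i *s w i" if "i \<le> d" for i
    proof -
      have "\<exists>k. f i = k *s w i" using f that unfolding Vs_def span_singleton by auto
      then show ?thesis unfolding c_def by (rule someI_ex)
    qed
    have "(\<Sum>i\<le>d. c i *s w i) = 0" using f fc by (metis (no_types, lifting) atMost_iff sum.cong)
    then show "\<forall>i\<le>d. f i = 0" using ind[of d c] fc by simp
    qed
  qed
  have lw: "lowers d X Vs" unfolding lowers_def Vs_def
    using low X0 by (auto simp: image_span_single[OF linX] span_single_scale)
  have rs: "raises d Y Vs" unfolding raises_def Vs_def
    using up Yd by (auto simp: image_span_single[OF linY] span_single_scale)
  show ?thesis unfolding LR_pair_def using linX linY dec lw rs by blast
qed

lemma main_LR:
  fixes d :: nat and A B :: "'b \<Rightarrow> 'b"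
  assumes dimV: "dim (UNIV::'b set) = d + 1" and d2: "2 \<le> d"
   and LR: "LR_pair scale d A B" and comm: "\<forall>v. A (B v) - B (A v) = v"
  shows "LR_pair scale d B (\<lambda>v. - A v - B v) \<and> LR_pair scale d (\<lambda>v. - A v - B v) A"
proof -
  from LR obtain Vs where linA: "Vector_Spaces.linear scale scale A"
    and linB: "Vector_Spaces.linear scale scale B"
    and dec: "is_decomposition scale d Vs" and lw: "lowers d A Vs" and rs: "raises d B Vs"
    unfolding LR_pair_def by blast
  note LA = lin_facts[OF linA] and LB = lin_facts[OF linB]
  have dimV': "dim (UNIV::'b set) = Suc d" using dimV by simp
  from dec have sub: "\<forall>i\<le>d. subspace (Vs i) \<and> dim (Vs i) = 1" unfolding is_decomposition_def by blast
  obtain v0 where v0: "v0 \<in> Vs 0" "v0 \<noteq> 0" using dim1_nonzero sub by blast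
  have comm': "A (B x) = B (A x) + x" for x using comm by (metis diff_add_cancel add.commute)
  define v where "v j = (B^^j) v0" for j
  have vS: "v (Suc j) = B (v j)" for j unfolding v_def by simp
  have v00: "v 0 = v0" unfolding v_def by simp
  have vgood: "j \<le> d \<longrightarrow> v j \<in> Vs j \<and> v j \<noteq> 0 \<and> Vs j = span {v j}" for j
  proof (induction j)
    case 0 show ?case using v0 sub dim1_span[OF dimV'] v00 by auto
  next
    case (Suc j)
    show ?case
    proof
      assume "Suc j \<le> d"
      then have IH: "v j \<in> Vs j" "v j \<noteq> 0" "Vs j = span {v j}" using Suc.IH by auto
      have "Vs (Suc j) = B ` Vs j" using rs \<open>Suc j \<le> d\<close> unfolding raises_def by auto
      also have "\<dots> = span {v (Suc j)}" using IH image_span_single[OF linB] vS by simp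
      finally have eq: "Vs (Suc j) = span {v (Suc j)}" .
      have "v (Suc j) \<noteq> 0"
      proof
        assume "v (Suc j) = 0"
        then have "Vs (Suc j) = {0}" using eq by simp
        then show False using sub \<open>Suc j \<le> d\<close> by (metis dim_zero_set zero_neq_one)
      qed
      then show "v (Suc j) \<in> Vs (Suc j) \<and> v (Suc j) \<noteq> 0 \<and> Vs (Suc j) = span {v (Suc j)}"
        using eq by (auto intro: span_base)
    qed
  qed
  have vd1: "v (Suc d) = 0"
  proof -
    have "B (v d) \<in> B ` Vs d" using vgood[of d] by auto
    moreover have "B ` Vs d = {0}" using rs unfolding raises_def by blast
    ultimately have "B (v d) = 0" by blast
    then show ?thesis by (simp add: vS)
  qed
  have vd1': "B (v d) = 0" using vd1 vS by simp
  have vbig: "v (Suc d + m) = 0" for m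
    by (induction m) (auto simp: vd1' vS LB)
  have Av0: "A (v 0) = 0"
  proof -
    have "A (v 0) \<in> A ` Vs 0" using vgood[of 0] by auto
    moreover have "A ` Vs 0 = {0}" using lw unfolding lowers_def by blast
    ultimately show ?thesis by blast
  qed
  have Av: "A (v (Suc j)) = of_nat (Suc j) *s v j" for j
  proof (induction j)
    case 0 show ?case using Av0 by (simp add: vS comm' LB)
  next
    case (Suc j)
    have "A (v (Suc (Suc j))) = B (A (v (Suc j))) + v (Suc j)" by (simp add: vS comm')
    also have "\<dots> = of_nat (Suc (Suc j)) *s v (Suc j)"
      using Suc.IH by (simp add: LB vS scale_left_distrib add.commute two_scale)
    finally show ?case .
  qed
  have Av': "A (B (v j)) = of_nat (Suc j) *s v j" for j using Av vS by metis
  have charnz: "of_nat j \<noteq> (0::'a)" if jj: "1 \<le> j" "j \<le> d" for j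
  proof
    assume j0: "of_nat j = (0::'a)"
    obtain i where i: "j = Suc i" using jj by (cases j) auto
    have "Vs i = A ` Vs (Suc i)" using lw jj i unfolding lowers_def by auto
    also have "\<dots> = span {A (v (Suc i))}" using vgood[of "Suc i"] jj i image_span_single[OF linA] by simp
    also have "\<dots> = {0}" using Av j0 i by simp
    finally show False using sub jj i by (metis dim_zero_set zero_neq_one Suc_leD)
  qed
  have chard: "of_nat (Suc d) = (0::'a)"
  proof -
    obtain n where n: "d = Suc n" using d2 by (cases d) auto
    have "A (B (v d)) - B (A (v d)) = v d" using comm by blast
    moreover have "A (B (v d)) = 0" using vd1' LA by simp
    moreover have "B (A (v d)) = of_nat d *s v d" using n Av vS LB by simp
    ultimately have "- (of_nat d *s v d) = v d" by simp
    then have "v d + of_nat d *s v d = 0" by (metis add.commute neg_eq_iff_add_eq_0)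
    then have "(1 + of_nat d) *s v d = 0" by (simp add: scale_left_distrib)
    then show ?thesis using vgood[of d] by simp
  qed
  have evd: "even d"
  proof (rule ccontr)
    assume "odd d"
    then obtain m where m: "Suc d = 2 * m" by (metis dvd_def odd_Suc_div_two even_Suc)
    have "of_nat (2::nat) \<noteq> (0::'a)" using charnz[of 2] d2 by linarith
    moreover have "of_nat m \<noteq> (0::'a)" using charnz[of m] m d2 by auto
    ultimately have "of_nat (Suc d) \<noteq> (0::'a)" unfolding m of_nat_mult by simp
    then show False using chard by simp
  qed
  define a :: "nat \<Rightarrow> 'a" where "a = acoef"
  define T where "T x = A x + B x" for x
  have Tadd: "T (x + y) = T x + T y" for x y unfolding T_def by (simp add: LA LB algebra_simps)
  have Tscale: "T (c *s x) = c *s T x" for c x unfolding T_def by (simp add: LA LB scale_right_distrib)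
  have Tv: "T (v j) = of_nat j *s v (j - 1) + v (Suc j)" for j
    unfolding T_def by (cases j) (simp_all add: Av0 Av' vS)
  define us where "us n = (\<Sum>j\<le>n. a j *s v j)" for n
  have claim: "Suc n \<le> d \<longrightarrow> T (us (Suc n)) = a n *s v (Suc n) + a (Suc n) *s v (Suc (Suc n))" for n
  proof (induction n)
    case 0 show ?case unfolding us_def a_def using Tv[of 0] by simp
  next
    case (Suc n)
    show ?case
    proof
      assume le: "Suc (Suc n) \<le> d"
      have "1 \<le> Suc (Suc n)" by simp
      from charnz[OF this le] have nz: "of_nat (Suc (Suc n)) \<noteq> (0::'a)" .
      have key: "a (Suc (Suc n)) * of_nat (Suc (Suc n)) = - a n"
        unfolding a_def using nz by simp
      have "us (Suc (Suc n)) = us (Suc n) + a (Suc (Suc n)) *s v (Suc (Suc n))"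
        unfolding us_def by simp
      then have "T (us (Suc (Suc n))) = a n *s v (Suc n) + a (Suc n) *s v (Suc (Suc n))
          + a (Suc (Suc n)) *s (of_nat (Suc (Suc n)) *s v (Suc n) + v (Suc (Suc (Suc n))))"
        using Suc.IH le by (simp add: Tadd Tscale Tv del: of_nat_Suc)
      also have "\<dots> = a (Suc n) *s v (Suc (Suc n)) + a (Suc (Suc n)) *s v (Suc (Suc (Suc n)))"
        by (simp add: scale_right_distrib key del: of_nat_Suc)
      finally show "T (us (Suc (Suc n))) = a (Suc n) *s v (Suc (Suc n)) + a (Suc (Suc n)) *s v (Suc (Suc (Suc n)))" .
    qed
  qed
  define u where "u = us d"
  have Tu: "T u = 0"
  proof -
    from evd obtain m where m: "d = 2 * m" by (rule evenE)
    define k where "k = m - 1"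
    have k: "d = Suc (Suc (2 * k))" using m d2 unfolding k_def by auto
    have "T u = a (Suc (2*k)) *s v (Suc (Suc (2*k))) + a (Suc (Suc (2*k))) *s v (Suc d)"
      using claim[of "Suc (2*k)"] k unfolding u_def by simp
    then show ?thesis unfolding a_def using vd1 by (simp add: acoef_odd[where k=k])
  qed
  define C where "C x = - A x - B x" for x
  have Cu: "C u = 0" using Tu unfolding C_def T_def by (metis minus_add_distrib diff_conv_add_uminus neg_0_equal_iff_equal)
  have linC: "Vector_Spaces.linear scale scale C"
    unfolding C_def[abs_def] Vector_Spaces.linear_iff using vector_space_axioms
    by (simp add: LA LB algebra_simps scale_right_diff_distrib)
  have lowv: "\<forall>i. 1 \<le> i \<and> i \<le> d \<longrightarrow> A (v i) = of_nat i *s v (i - 1) \<and> of_nat i \<noteq> (0::'a)"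
    using Av charnz by (metis Suc_diff_1 less_eq_Suc_le One_nat_def)
  note ind = indep_seq[OF linA lowv Av0, of d]
  have unz: "u \<noteq> 0"
  proof
    assume "u = 0"
    then have "a 0 = 0" using ind[of a 0] vgood[of 0] unfolding u_def us_def by simp
    then show False unfolding a_def by simp
  qed
  have Bpow: "(B^^k) (v j) = v (k + j)" for k j unfolding v_def by (simp add: funpow_add)
  note LBp = lin_facts[OF lin_pow[OF linB vector_space_axioms]]
  note LAp = lin_facts[OF lin_pow[OF linA vector_space_axioms]]
  have Bnil: "(B^^Suc d) u = 0"
    unfolding u_def us_def by (simp only: LBp Bpow vbig) simp
  have Anil: "j < n \<Longrightarrow> (A^^n) (v j) = 0" for j n
  proof (induction j arbitrary: n)
    case 0
    then obtain m where "n = Suc m" by (cases n) auto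
    then show ?case using Av0 LAp by (simp add: funpow_Suc_right del: funpow.simps)
  next
    case (Suc j)
    then obtain m where m: "n = Suc m" by (cases n) auto
    then have "(A^^n) (v (Suc j)) = (A^^m) (of_nat (Suc j) *s v j)"
      using Av by (simp add: funpow_Suc_right del: funpow.simps)
    then show ?case using Suc m LAp by simp
  qed
  have Anilu: "(A^^Suc d) u = 0"
    unfolding u_def us_def by (simp only: LAp) (rule sum.neutral, auto simp: Anil LAp simp del: funpow.simps)
  have commBC: "C (B x) = B (C x) - x" for x unfolding C_def by (simp add: LB comm' algebra_simps)
  have commCA: "C (A x) = A (C x) + x" for x unfolding C_def by (simp add: LA comm' algebra_simps)
  have CB: "C ((B^^Suc n) u) = - (of_nat (Suc n) *s (B^^n) u)" for n
  proof (induction n)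
    case 0 show ?case using Cu by (simp add: commBC LB)
  next
    case (Suc n)
    have "C ((B^^Suc (Suc n)) u) = B (C ((B^^Suc n) u)) - (B^^Suc n) u" using commBC by simp
    also have "\<dots> = - (of_nat (Suc (Suc n)) *s (B^^Suc n) u)" using Suc.IH
      by (simp add: LB scale_left_distrib del: funpow.simps) (simp add: algebra_simps two_scale)
    finally show ?case .
  qed
  have CA: "C ((A^^Suc n) u) = of_nat (Suc n) *s (A^^n) u" for n
  proof (induction n)
    case 0 show ?case using Cu by (simp add: commCA LA)
  next
    case (Suc n)
    have "C ((A^^Suc (Suc n)) u) = A (C ((A^^Suc n) u)) + (A^^Suc n) u" using commCA by simp
    also have "\<dots> = of_nat (Suc (Suc n)) *s (A^^Suc n) u" using Suc.IH
      by (simp add: LA scale_left_distrib del: funpow.simps) (simp add: algebra_simps two_scale)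
    finally show ?case .
  qed
  have BCpair: "LR_pair scale d B C"
  proof (rule LR_gen[OF dimV linB linC, where w="\<lambda>i. (B^^(d - i)) u" and \<alpha>="\<lambda>_. 1"
        and \<beta>="\<lambda>i. - of_nat (d - i)"])
    show "\<forall>i. 1 \<le> i \<and> i \<le> d \<longrightarrow> B ((B^^(d - i)) u) = 1 *s (B^^(d - (i - 1))) u \<and> (1::'a) \<noteq> 0"
    proof (intro allI impI)
      fix i assume "1 \<le> i \<and> i \<le> d"
      then have "d - (i - 1) = Suc (d - i)" by auto
      then show "B ((B^^(d - i)) u) = 1 *s (B^^(d - (i - 1))) u \<and> (1::'a) \<noteq> 0" by simp
    qed
    show "B ((B^^(d - 0)) u) = 0" using Bnil by simp
    show "\<forall>i<d. C ((B^^(d - i)) u) = (- of_nat (d - i)) *s (B^^(d - Suc i)) u \<and> - of_nat (d - i) \<noteq> (0::'a)"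
    proof (intro allI impI)
      fix i assume "i < d"
      then have e: "d - i = Suc (d - Suc i)" by simp
      have "C ((B^^(d - i)) u) = (- of_nat (d - i)) *s (B^^(d - Suc i)) u"
        unfolding e CB by (simp only: scale_minus_left)
      moreover have "of_nat (d - i) \<noteq> (0::'a)" using charnz[of "d - i"] \<open>i < d\<close> by linarith
      ultimately show "C ((B^^(d - i)) u) = (- of_nat (d - i)) *s (B^^(d - Suc i)) u \<and> - of_nat (d - i) \<noteq> (0::'a)"
        by simp
    qed
    show "C ((B^^(d - d)) u) = 0" using Cu by simp
    obtain n where n: "d = Suc n" using d2 by (cases d) auto
    have "(B^^d) u = (\<Sum>j\<le>d. a j *s v (d + j))" unfolding u_def us_def by (simp only: LBp Bpow)
    also have "\<dots> = a 0 *s v (d + 0) + (\<Sum>j\<le>n. a (Suc j) *s v (d + Suc j))"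
      unfolding n by (rule sum.atMost_Suc_shift)
    also have "\<dots> = v d" unfolding a_def using vbig n by simp
    finally show "(B^^(d - 0)) u \<noteq> 0" using vgood[of d] by simp
  qed
  have CApair: "LR_pair scale d C A"
  proof (rule LR_gen[OF dimV linC linA, where w="\<lambda>i. (A^^i) u" and \<alpha>="\<lambda>i. of_nat i"
        and \<beta>="\<lambda>_. 1"])
    show "\<forall>i. 1 \<le> i \<and> i \<le> d \<longrightarrow> C ((A^^i) u) = of_nat i *s (A^^(i - 1)) u \<and> of_nat i \<noteq> (0::'a)"
    proof (intro allI impI)
      fix i assume i: "1 \<le> i \<and> i \<le> d"
      then obtain m where m: "i = Suc m" by (cases i) auto
      show "C ((A^^i) u) = of_nat i *s (A^^(i - 1)) u \<and> of_nat i \<noteq> (0::'a)"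
      proof -
        have "of_nat i \<noteq> (0::'a)" using charnz i by blast
        then show ?thesis using CA[of m] m by simp
      qed
    qed
    show "C ((A^^0) u) = 0" using Cu by simp
    show "\<forall>i<d. A ((A^^i) u) = 1 *s (A^^Suc i) u \<and> (1::'a) \<noteq> 0" by simp
    show "A ((A^^d) u) = 0" using Anilu by simp
    show "(A^^0) u \<noteq> 0" using unz by simp
  qed
  show ?thesis using BCpair CApair unfolding C_def[abs_def] by simp
qed

end

theorem lemma4p7:
  fixes scale :: "'f::field \<Rightarrow> 'v::ab_group_add \<Rightarrow> 'v"
    and d :: nat and A B C :: "'v \<Rightarrow> 'v"
  assumes "vector_space scale"
    and "Vector_Spaces.vector_space.dim scale (UNIV :: 'v set) = d + 1"
    and "d \<ge> 2"
    and "LR_pair scale d A B"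
    and "\<forall>v. A (B v) - B (A v) = v"
    and "C = (\<lambda>v. - A v - B v)"
  shows "LR_pair scale d B C \<and> LR_pair scale d C A \<and>
         (\<forall>v. B (C v) - C (B v) = v) \<and> (\<forall>v. C (A v) - A (C v) = v)"
proof -
  have lp: "LR_pair scale d B C \<and> LR_pair scale d C A"
    using vector_space.main_LR[OF assms(1) assms(2) assms(3) assms(4) assms(5)] assms(6) by simp
  have linA: "Vector_Spaces.linear scale scale A" and linB: "Vector_Spaces.linear scale scale B"
    using assms(4) unfolding LR_pair_def by blast+
  note LA = lin_facts[OF linA] and LB = lin_facts[OF linB]
  have comm': "A (B x) = B (A x) + x" for x using assms(5) by (metis diff_add_cancel add.commute)
  have "B (C v) - C (B v) = v" for v unfolding assms(6) by (simp add: LA LB comm' algebra_simps)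
  moreover have "C (A v) - A (C v) = v" for v unfolding assms(6) by (simp add: LA LB comm' algebra_simps)
  ultimately show ?thesis using lp by blast
qed

end
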